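(* Let $(M,\circ,\mathrm{OR})$ be a free $\mathbb{D}$-module of rank 3 with scalar product and orientation, and let $z_1,z_2,z_3\in M\setminus\epsilon M$. Then $z_1\times z_2\circ z_3=0$ if and only if either the three axes are parallel, or the three axes intersect orthogonally a common line of $E$.
   Context: $\mathbb{D}=\{a+\epsilon b: a,b\in\mathbb{R}\}$, $\epsilon^2=0$. Scalar product: symmetric $\mathbb{D}$-bilinear $\circ:M\times M\to\mathbb{D}$ with $\mathfrak{Re}(x\circ x)\ge0$, equality iff $x\in\epsilon M$; orientation: one of the two classes of ordered bases under $\{b'_j=A_{jk}b_k\}\sim\{b_k\}$ iff $\det\mathfrak{Re}(A)>0$. Cross product $x\times y=x^iy^j\epsilon_{ijk}m_k$ in any positive orthonormal basis $\{m_i\}$; $z_1\times z_2\circ z_3$ means $(z_1\times z_2)\circ z_3$. $V=M/\epsilon M$, $\pi$ the quotient map. $E$ is the set of real 3-dimensional subspaces $P\subset M$ with $\mathfrak{Du}(x\circ y)=0$ for $x,y\in P$ and $P\cap\epsilon M=\{0\}$, a Euclidean affine space over $V$ (with $B-A:=d^ke_k$ where $e^B_i=e^A_i+\epsilon\,\epsilon_{ijk}d^ke^A_j$, $\{e_i\}$ positive orthonormal in $V$, $e^P_i\in P$ its lift). Each $z\in M\setminus\epsilon M$ is uniquely $z=(a+\epsilon b)u$ with $a>0$, $b\in\mathbb{R}$, $u\circ u=1$; its axis is the line $\{P\in E: u\in P\}$, with direction $\pi(u)$. *)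

theory Defs
  imports "HOL-Analysis.Analysis"
begin

datatype dual = Dual (dRe: real) (dDu: real)

instantiation dual :: comm_ring_1
begin
definition "0 = Dual 0 0"
definition "1 = Dual 1 0"
definition "a + b = Dual (dRe a + dRe b) (dDu a + dDu b)"
definition "a - b = Dual (dRe a - dRe b) (dDu a - dDu b)"
definition "- a = Dual (- dRe a) (- dDu a)"
definition "a * b = Dual (dRe a * dRe b) (dRe a * dDu b + dDu a * dRe b)"
instance
  by standard (auto simp: zero_dual_def one_dual_def plus_dual_def minus_dual_def
      uminus_dual_def times_dual_def dual.expand algebra_simps)
end

definition eps :: dual where "eps = Dual 0 1"

section \<open>The module M = D^3 (every free D-module of rank 3 is isomorphic to it)\<close>

type_synonym dmod = "dual ^ 3"

definition epsM :: "dmod set" where "epsM = range (\<lambda>x. eps *s x)"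

definition rsc :: "real \<Rightarrow> dmod \<Rightarrow> dmod" where "rsc r x = Dual r 0 *s x"

definition scalar_product :: "(dmod \<Rightarrow> dmod \<Rightarrow> dual) \<Rightarrow> bool" where
  "scalar_product sp \<longleftrightarrow>
     (\<forall>x y. sp x y = sp y x) \<and>
     (\<forall>x y z. sp (x + y) z = sp x z + sp y z) \<and>
     (\<forall>c x y. sp (c *s x) y = c * sp x y) \<and>
     (\<forall>x. dRe (sp x x) \<ge> 0 \<and> (dRe (sp x x) = 0 \<longleftrightarrow> x \<in> epsM))"

definition is_basis :: "(3 \<Rightarrow> dmod) \<Rightarrow> bool" where
  "is_basis b \<longleftrightarrow> (\<forall>x. \<exists>!c::3 \<Rightarrow> dual. x = (\<Sum>i\<in>UNIV. c i *s b i))"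

definition same_orient :: "(3 \<Rightarrow> dmod) \<Rightarrow> (3 \<Rightarrow> dmod) \<Rightarrow> bool" where
  "same_orient b b' \<longleftrightarrow> (\<exists>A :: dual ^ 3 ^ 3.
      (\<forall>j. b' j = (\<Sum>k\<in>UNIV. (A $ j $ k) *s b k)) \<and>
      det (\<chi> i j. dRe (A $ i $ j)) > 0)"

definition orientation :: "(3 \<Rightarrow> dmod) set \<Rightarrow> bool" where
  "orientation OR \<longleftrightarrow> (\<exists>b0. is_basis b0 \<and> OR = {b. is_basis b \<and> same_orient b0 b})"

definition pos_orthonormal :: "(dmod \<Rightarrow> dmod \<Rightarrow> dual) \<Rightarrow> (3 \<Rightarrow> dmod) set \<Rightarrow> (3 \<Rightarrow> dmod) \<Rightarrow> bool" where
  "pos_orthonormal sp OR m \<longleftrightarrow> m \<in> OR \<and> (\<forall>i j. sp (m i) (m j) = (if i = j then 1 else 0))"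

definition levi :: "3 \<Rightarrow> 3 \<Rightarrow> 3 \<Rightarrow> real" where
  "levi i j k =
     (if (i, j, k) \<in> {(1, 2, 3), (2, 3, 1), (3, 1, 2)} then 1
      else if (i, j, k) \<in> {(1, 3, 2), (3, 2, 1), (2, 1, 3)} then -1 else 0)"

definition coords :: "(3 \<Rightarrow> dmod) \<Rightarrow> dmod \<Rightarrow> 3 \<Rightarrow> dual" where
  "coords m x = (THE c. x = (\<Sum>i\<in>UNIV. c i *s m i))"

definition cross :: "(dmod \<Rightarrow> dmod \<Rightarrow> dual) \<Rightarrow> (3 \<Rightarrow> dmod) set \<Rightarrow> dmod \<Rightarrow> dmod \<Rightarrow> dmod" where
  "cross sp OR x y =
     (let m = (SOME m. pos_orthonormal sp OR m)
      in (\<Sum>k\<in>UNIV. (\<Sum>i\<in>UNIV. \<Sum>j\<in>UNIV.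
             coords m x i * coords m y j * Dual (levi i j k) 0) *s m k))"

definition pi :: "dmod \<Rightarrow> dmod set" where "pi x = {y. x - y \<in> epsM}"

definition Eset :: "(dmod \<Rightarrow> dmod \<Rightarrow> dual) \<Rightarrow> dmod set set" where
  "Eset sp = {P. (\<exists>b :: 3 \<Rightarrow> dmod.
                    (\<forall>c. (\<Sum>i\<in>UNIV. rsc (c i) (b i)) = 0 \<longrightarrow> (\<forall>i. c i = 0)) \<and>
                    P = range (\<lambda>c. \<Sum>i\<in>UNIV. rsc (c i) (b i))) \<and>
                 (\<forall>x\<in>P. \<forall>y\<in>P. dDu (sp x y) = 0) \<and>
                 P \<inter> epsM = {0}}"

definition lift :: "dmod set \<Rightarrow> dmod \<Rightarrow> dmod" where
  "lift P v = (THE y. y \<in> P \<and> pi y = pi v)"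

text \<open>B - A \<in> V for A, B \<in> E: with e^A a positive orthonormal basis lying in A
  (the lift of a positive orthonormal basis of V), e^B_i = e^A_i + eps eps_ijk d^k e^A_j,
  and B - A = d^k e_k\<close>
definition diffE :: "(dmod \<Rightarrow> dmod \<Rightarrow> dual) \<Rightarrow> (3 \<Rightarrow> dmod) set \<Rightarrow> dmod set \<Rightarrow> dmod set \<Rightarrow> dmod set" where
  "diffE sp OR B A =
     (let eA = (SOME e. pos_orthonormal sp OR e \<and> (\<forall>i. e i \<in> A));
          d = (THE d :: 3 \<Rightarrow> real. \<forall>i. lift B (eA i) =
                 eA i + eps *s (\<Sum>j\<in>UNIV. \<Sum>k\<in>UNIV. rsc (levi i j k * d k) (eA j)))
      in pi (\<Sum>k\<in>UNIV. rsc (d k) (eA k)))"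

definition lineE :: "(dmod \<Rightarrow> dmod \<Rightarrow> dual) \<Rightarrow> (3 \<Rightarrow> dmod) set \<Rightarrow> dmod set \<Rightarrow> dmod \<Rightarrow> dmod set set" where
  "lineE sp OR A w = {B \<in> Eset sp. \<exists>t::real. diffE sp OR B A = pi (rsc t w)}"

definition unitpart :: "(dmod \<Rightarrow> dmod \<Rightarrow> dual) \<Rightarrow> dmod \<Rightarrow> dmod" where
  "unitpart sp z = (THE u. \<exists>a b. a > 0 \<and> z = Dual a b *s u \<and> sp u u = 1)"

definition axis :: "(dmod \<Rightarrow> dmod \<Rightarrow> dual) \<Rightarrow> dmod \<Rightarrow> dmod set set" where
  "axis sp z = {P \<in> Eset sp. unitpart sp z \<in> P}"

text \<open>direction of the axis of z is pi (unitpart z); directions pi x, pi y in V are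
  parallel iff one is a real multiple of the other; the inner product on V is
  pi x . pi y = Re (x o y)\<close>
definition vparallel :: "dmod \<Rightarrow> dmod \<Rightarrow> bool" where
  "vparallel x y \<longleftrightarrow> (\<exists>r::real. pi x = pi (rsc r y))"

end

theory Submission
  imports Defs
begin

unbundle cross3_syntax

lemma dual_eq_iff: "x = y \<longleftrightarrow> dRe x = dRe y \<and> dDu x = dDu y"
  by (cases x; cases y) auto

lemma dual_simps[simp]:
  "dRe (x + y) = dRe x + dRe y" "dDu (x + y) = dDu x + dDu y"
  "dRe (x - y) = dRe x - dRe y" "dDu (x - y) = dDu x - dDu y"
  "dRe (- x) = - dRe x" "dDu (- x) = - dDu x"
  "dRe (x * y) = dRe x * dRe y" "dDu (x * y) = dRe x * dDu y + dDu x * dRe y"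
  "dRe 0 = 0" "dDu 0 = 0" "dRe 1 = 1" "dDu 1 = 0" "dRe eps = 0" "dDu eps = 1"
  by (simp_all add: plus_dual_def minus_dual_def uminus_dual_def times_dual_def
      zero_dual_def one_dual_def eps_def)

lemma dRe_sum[simp]: "dRe (sum f A) = (\<Sum>i\<in>A. dRe (f i))"
  by (induction A rule: infinite_finite_induct) auto
lemma dDu_sum[simp]: "dDu (sum f A) = (\<Sum>i\<in>A. dDu (f i))"
  by (induction A rule: infinite_finite_induct) auto

lemma levi_vals[simp]:
  "levi 1 2 3 = 1" "levi 2 3 1 = 1" "levi 3 1 2 = 1"
  "levi 1 3 2 = -1" "levi 3 2 1 = -1" "levi 2 1 3 = -1"
  "levi 1 1 k = 0" "levi 2 2 k = 0" "levi 3 3 k = 0"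
  "levi 1 k 1 = 0" "levi 2 k 2 = 0" "levi 3 k 3 = 0"
  "levi k 1 1 = 0" "levi k 2 2 = 0" "levi k 3 3 = 0"
  by (auto simp: levi_def)

lemma epsM_iff: "x \<in> epsM \<longleftrightarrow> (\<forall>i. dRe (x $ i) = 0)"
proof
  assume "x \<in> epsM" then show "\<forall>i. dRe (x $ i) = 0" by (auto simp: epsM_def)
next
  assume h: "\<forall>i. dRe (x $ i) = 0"
  have "x = eps *s (\<chi> i. Dual (dDu (x $ i)) 0)"
    using h by (auto simp: vec_eq_iff dual_eq_iff)
  then show "x \<in> epsM" unfolding epsM_def by blast
qed

lemma smult_comp[simp]: "(c *s x) $ i = c * x $ i" by simp
lemma rsc_comp[simp]: "rsc r x $ i = Dual r 0 * x $ i" by (simp add: rsc_def)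
lemma dual_Dual[simp]: "dRe (Dual a b) = a" "dDu (Dual a b) = b" by auto


locale SP = fixes sp :: "dmod \<Rightarrow> dmod \<Rightarrow> dual" assumes spa: "scalar_product sp"
begin

lemma sym: "sp x y = sp y x" using spa unfolding scalar_product_def by blast
lemma addL: "sp (x + y) z = sp x z + sp y z" using spa unfolding scalar_product_def by blast
lemma addR: "sp z (x + y) = sp z x + sp z y" using addL sym by metis
lemma smL: "sp (c *s x) y = c * sp x y" using spa unfolding scalar_product_def by blast
lemma smR: "sp y (c *s x) = c * sp y x" using smL sym by metis
lemma zeroL[simp]: "sp 0 y = 0" using smL[of 0 0 y] by simp
lemma zeroR[simp]: "sp y 0 = 0" using zeroL sym by metis
lemma negL: "sp (- x) y = - sp x y"
proof -
  have "-1 *s x = - x" by (simp add: vec_eq_iff)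
  then show ?thesis using smL[of "-1" x y] by simp
qed
lemma negR: "sp y (- x) = - sp y x" using negL sym by metis
lemma diffL: "sp (x - y) z = sp x z - sp y z" using addL[of x "-y"] negL by simp
lemma diffR: "sp z (x - y) = sp z x - sp z y" using diffL sym by metis
lemma sumL: "sp (sum f A) y = (\<Sum>i\<in>A. sp (f i) y)"
  by (induction A rule: infinite_finite_induct) (auto simp: addL)
lemma sumR: "sp y (sum f A) = (\<Sum>i\<in>A. sp y (f i))"
proof -
  have "sp y (sum f A) = sp (sum f A) y" by (rule sym)
  also have "\<dots> = (\<Sum>i\<in>A. sp (f i) y)" by (rule sumL)
  also have "\<dots> = (\<Sum>i\<in>A. sp y (f i))" by (rule sum.cong) (auto intro: sym)
  finally show ?thesis .
qed
lemma rscL: "sp (rsc r x) y = Dual r 0 * sp x y" by (simp add: rsc_def smL)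
lemma rscR: "sp y (rsc r x) = Dual r 0 * sp y x" by (simp add: rsc_def smR)
lemma pos: "dRe (sp x x) \<ge> 0" using spa unfolding scalar_product_def by blast
lemma pos0: "dRe (sp x x) = 0 \<longleftrightarrow> x \<in> epsM" using spa unfolding scalar_product_def by blast
lemma posne: "x \<notin> epsM \<Longrightarrow> dRe (sp x x) > 0" using pos[of x] pos0[of x] by (simp add: less_le)

lemmas lin = addL addR smL smR negL negR diffL diffR sumL sumR rscL rscR

end

definition dsqrt :: "dual \<Rightarrow> dual" where
  "dsqrt s = Dual (sqrt (dRe s)) (dDu s / (2 * sqrt (dRe s)))"
definition dinv :: "dual \<Rightarrow> dual" where
  "dinv s = Dual (1 / dRe s) (- dDu s / (dRe s)^2)"

lemma dsqrt_sq: "dRe s > 0 \<Longrightarrow> dsqrt s * dsqrt s = s"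
  by (simp add: dsqrt_def dual_eq_iff field_simps)
lemma dinv_l: "dRe s \<noteq> 0 \<Longrightarrow> dinv s * s = 1"
  by (simp add: dinv_def dual_eq_iff field_simps power2_eq_square)
lemma dinv_r: "dRe s \<noteq> 0 \<Longrightarrow> s * dinv s = 1"
  by (simp add: dinv_def dual_eq_iff field_simps power2_eq_square)
lemma dsqrt_pos: "dRe s > 0 \<Longrightarrow> dRe (dsqrt s) > 0" by (simp add: dsqrt_def)
lemma dinv_pos: "dRe s > 0 \<Longrightarrow> dRe (dinv s) > 0" by (simp add: dinv_def)

lemma smult_cancel: "dRe c \<noteq> 0 \<Longrightarrow> c *s x = c *s y \<Longrightarrow> x = y"
proof -
  assume a: "dRe c \<noteq> 0" "c *s x = c *s y"
  have "x $ i = y $ i" for i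
  proof -
    have "c * x $ i = c * y $ i" using a(2) by (metis smult_comp)
    then have "dinv c * c * x $ i = dinv c * c * y $ i" by (simp add: mult.assoc)
    then show ?thesis using dinv_l[OF a(1)] by simp
  qed
  then show ?thesis by (simp add: vec_eq_iff)
qed
lemma mult_cancel_dual: "dRe c \<noteq> 0 \<Longrightarrow> c * x = 0 \<Longrightarrow> x = (0::dual)"
proof -
  assume a: "dRe c \<noteq> 0" "c * x = 0"
  then have "dinv c * c * x = 0" by (simp add: mult.assoc)
  then show ?thesis using dinv_l[OF a(1)] by simp
qed


definition orthonormal :: "(dmod \<Rightarrow> dmod \<Rightarrow> dual) \<Rightarrow> (3 \<Rightarrow> dmod) \<Rightarrow> bool" where
  "orthonormal sp q \<longleftrightarrow> (\<forall>i j. sp (q i) (q j) = (if i = j then 1 else 0))"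

definition inspan :: "(3 \<Rightarrow> dmod) \<Rightarrow> dmod \<Rightarrow> bool" where
  "inspan q x \<longleftrightarrow> (\<exists>c. x = (\<Sum>i\<in>UNIV. c i *s q i))"

definition bv :: "3 \<Rightarrow> 'a::zero_neq_one^3" where "bv j = (\<chi> i. if i = j then 1 else 0)"

lemma bv_comp[simp]: "bv j $ i = (if i = j then 1 else 0)" by (simp add: bv_def)

lemma lincomb_comp: "(\<Sum>i\<in>A. c i *s v i) $ n = (\<Sum>i\<in>A. c i * v i $ n)"
  by (simp add: sum_component)

lemma is_basis_iff: "is_basis b \<longleftrightarrow> (\<forall>x. inspan b x) \<and>
   (\<forall>c d. (\<Sum>i\<in>UNIV. c i *s b i) = (\<Sum>i\<in>UNIV. d i *s b i) \<longrightarrow> c = d)"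
proof
  assume h: "is_basis b"
  show "(\<forall>x. inspan b x) \<and> (\<forall>c d. (\<Sum>i\<in>UNIV. c i *s b i) = (\<Sum>i\<in>UNIV. d i *s b i) \<longrightarrow> c = d)"
  proof (intro conjI allI impI)
    fix x show "inspan b x" using h unfolding is_basis_def inspan_def by blast
  next
    fix c d :: "3 \<Rightarrow> dual" assume e: "(\<Sum>i\<in>UNIV. c i *s b i) = (\<Sum>i\<in>UNIV. d i *s b i)"
    from h have "\<exists>!c'. (\<Sum>i\<in>UNIV. c i *s b i) = (\<Sum>i\<in>UNIV. c' i *s b i)"
      unfolding is_basis_def by blast
    then show "c = d" using e by blast
  qed
next
  assume h: "(\<forall>x. inspan b x) \<and> (\<forall>c d. (\<Sum>i\<in>UNIV. c i *s b i) = (\<Sum>i\<in>UNIV. d i *s b i) \<longrightarrow> c = d)"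
  show "is_basis b" unfolding is_basis_def
  proof
    fix x
    from h obtain c where c: "x = (\<Sum>i\<in>UNIV. c i *s b i)" unfolding inspan_def by blast
    show "\<exists>!c. x = (\<Sum>i\<in>UNIV. c i *s b i)"
    proof (rule ex1I[of _ c])
      show "x = (\<Sum>i\<in>UNIV. c i *s b i)" by (rule c)
    next
      fix d assume "x = (\<Sum>i\<in>UNIV. d i *s b i)"
      then show "d = c" using h c by metis
    qed
  qed
qed

lemma inspan_basis: "inspan q (q j)"
proof -
  have "(\<Sum>i\<in>UNIV. (if i = j then 1 else 0) *s q i) = (\<Sum>i\<in>UNIV. if i = j then q i else 0)"
    by (rule sum.cong) auto
  also have "\<dots> = q j" by simp
  finally show ?thesis unfolding inspan_def by (intro exI[where x="\<lambda>i. if i = j then 1 else 0"]) simp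
qed

lemma inspan_add: "inspan q x \<Longrightarrow> inspan q y \<Longrightarrow> inspan q (x + y)"
proof -
  assume "inspan q x" "inspan q y"
  then obtain c d where c: "x = (\<Sum>i\<in>UNIV. c i *s q i)" and d: "y = (\<Sum>i\<in>UNIV. d i *s q i)"
    unfolding inspan_def by blast
  have "x + y = (\<Sum>i\<in>UNIV. (c i + d i) *s q i)"
    unfolding c d by (simp add: vec_eq_iff lincomb_comp algebra_simps sum.distrib)
  then show ?thesis unfolding inspan_def by (intro exI[where x="\<lambda>i. c i + d i"]) simp
qed

lemma inspan_smult: "inspan q x \<Longrightarrow> inspan q (a *s x)"
proof -
  assume "inspan q x"
  then obtain c where c: "x = (\<Sum>i\<in>UNIV. c i *s q i)" unfolding inspan_def by blast
  have "a *s x = (\<Sum>i\<in>UNIV. (a * c i) *s q i)"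
    unfolding c by (simp add: vec_eq_iff lincomb_comp sum_distrib_left mult.assoc)
  then show ?thesis unfolding inspan_def by (intro exI[where x="\<lambda>i. a * c i"]) simp
qed

lemma inspan_diff: "inspan q x \<Longrightarrow> inspan q y \<Longrightarrow> inspan q (x - y)"
proof -
  assume "inspan q x" "inspan q y"
  moreover have "x - y = x + (-1) *s y" by (simp add: vec_eq_iff)
  ultimately show ?thesis by (metis inspan_add inspan_smult)
qed

lemma axis_expand: "(x::dmod) = x $ 1 *s bv 1 + x $ 2 *s bv 2 + x $ 3 *s bv 3"
  by (simp add: vec_eq_iff bv_def forall_3)

lemma inspan_all:
  assumes "\<And>j. inspan q (bv j)" shows "inspan q x"
  by (subst axis_expand) (intro inspan_add inspan_smult assms)

context SP begin

lemma coeff: "orthonormal sp q \<Longrightarrow> sp (\<Sum>i\<in>UNIV. c i *s q i) (q j) = c j"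
proof -
  assume o: "orthonormal sp q"
  have "sp (\<Sum>i\<in>UNIV. c i *s q i) (q j) = (\<Sum>i\<in>UNIV. c i * sp (q i) (q j))"
    by (simp add: sumL smL)
  also have "\<dots> = (\<Sum>i\<in>UNIV. if i = j then c i else 0)"
    using o by (intro sum.cong) (auto simp: orthonormal_def)
  also have "\<dots> = c j" by simp
  finally show ?thesis .
qed

lemma basis_of_orth: "orthonormal sp q \<Longrightarrow> (\<And>x. inspan q x) \<Longrightarrow> is_basis q"
proof -
  assume o: "orthonormal sp q" and sp: "\<And>x. inspan q x"
  show ?thesis unfolding is_basis_iff
  proof (intro conjI allI impI)
    fix x show "inspan q x" by (rule sp)
  next
    fix c d :: "3 \<Rightarrow> dual" assume e: "(\<Sum>i\<in>UNIV. c i *s q i) = (\<Sum>i\<in>UNIV. d i *s q i)"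
    show "c = d"
    proof
      fix j
      have "c j = sp (\<Sum>i\<in>UNIV. c i *s q i) (q j)" using coeff[OF o] by simp
      also have "\<dots> = d j" unfolding e using coeff[OF o] by simp
      finally show "c j = d j" .
    qed
  qed
qed

definition nrm :: "dmod \<Rightarrow> dmod" where "nrm x = dinv (dsqrt (sp x x)) *s x"

lemma nrm_unit: assumes "x \<notin> epsM" shows "sp (nrm x) (nrm x) = 1"
proof -
  let ?s = "sp x x"
  have p: "dRe ?s > 0" using posne assms .
  have "sp (nrm x) (nrm x) = dinv (dsqrt ?s) * dinv (dsqrt ?s) * (dsqrt ?s * dsqrt ?s)"
    by (simp add: nrm_def smL smR dsqrt_sq[OF p] mult.assoc)
  also have "\<dots> = (dinv (dsqrt ?s) * dsqrt ?s) * (dinv (dsqrt ?s) * dsqrt ?s)"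
    by (simp add: ac_simps)
  also have "\<dots> = 1" using dinv_l dsqrt_pos[OF p] by simp
  finally show ?thesis .
qed

lemma nrm_back: assumes "x \<notin> epsM" shows "x = dsqrt (sp x x) *s nrm x"
proof -
  have p: "dRe (sp x x) > 0" using posne assms .
  then have "dsqrt (sp x x) * dinv (dsqrt (sp x x)) = 1" using dinv_r dsqrt_pos by force
  then show ?thesis by (simp add: nrm_def vector_smult_assoc)
qed

lemma exists_orthonormal_basis: "\<exists>m. orthonormal sp m \<and> is_basis m"
proof -
  let ?s = "\<lambda>j. bv j :: dmod"
  define g1 where "g1 = nrm (?s 1)"
  define y2 where "y2 = ?s 2 - sp (?s 2) g1 *s g1"
  define g2 where "g2 = nrm y2"
  define y3 where "y3 = ?s 3 - sp (?s 3) g1 *s g1 - sp (?s 3) g2 *s g2"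
  define g3 where "g3 = nrm y3"
  have n1: "?s 1 \<notin> epsM" by (auto simp: epsM_iff bv_def)
  have "y2 $ 2 = 1" by (simp add: y2_def g1_def nrm_def bv_def)
  then have n2: "y2 \<notin> epsM" by (auto simp: epsM_iff intro!: exI[of _ 2])
  have "y3 $ 3 = 1" by (simp add: y3_def g2_def y2_def g1_def nrm_def bv_def)
  then have n3: "y3 \<notin> epsM" by (auto simp: epsM_iff intro!: exI[of _ 3])
  have u1: "sp g1 g1 = 1" unfolding g1_def using nrm_unit n1 .
  have u2: "sp g2 g2 = 1" unfolding g2_def using nrm_unit n2 .
  have u3: "sp g3 g3 = 1" unfolding g3_def using nrm_unit n3 .
  have o12: "sp g1 g2 = 0"
    unfolding g2_def nrm_def y2_def by (simp add: smR diffR u1 sym)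
  have o13: "sp g1 g3 = 0"
    unfolding g3_def nrm_def y3_def by (simp add: smR diffR u1 o12 sym)
  have o23: "sp g2 g3 = 0"
    unfolding g3_def nrm_def y3_def by (simp add: smR diffR u2 o12 sym[of g2 g1] sym[of g2 "?s 3"])
  define m where "m = (\<lambda>i::3. if i = 1 then g1 else if i = 2 then g2 else g3)"
  have m1: "m 1 = g1" and m2: "m 2 = g2" and m3: "m 3 = g3" by (simp_all add: m_def)
  have on: "orthonormal sp m"
    unfolding orthonormal_def
  proof (intro allI)
    fix i j :: 3
    show "sp (m i) (m j) = (if i = j then 1 else 0)"
      using exhaust_3[of i] exhaust_3[of j]
      by (auto simp: m1 m2 m3 u1 u2 u3 o12 o13 o23 sym[of g2 g1] sym[of g3 g1] sym[of g3 g2])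
  qed
  have sp1: "inspan m g1" "inspan m g2" "inspan m g3"
    using inspan_basis[of m 1] inspan_basis[of m 2] inspan_basis[of m 3] by (simp_all add: m1 m2 m3)
  have "inspan m (?s 1)"
    using nrm_back[OF n1] sp1 inspan_smult by (metis g1_def)
  moreover have "inspan m (?s 2)"
  proof -
    have "?s 2 = y2 + sp (?s 2) g1 *s g1" by (simp add: y2_def)
    moreover have "inspan m y2" using nrm_back[OF n2] sp1 inspan_smult by (metis g2_def)
    ultimately show ?thesis using sp1 inspan_add inspan_smult by metis
  qed
  moreover have "inspan m (?s 3)"
  proof -
    have "?s 3 = y3 + sp (?s 3) g1 *s g1 + sp (?s 3) g2 *s g2" by (simp add: y3_def)
    moreover have "inspan m y3" using nrm_back[OF n3] sp1 inspan_smult by (metis g3_def)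
    ultimately show ?thesis using sp1 inspan_add inspan_smult by metis
  qed
  ultimately have "inspan m (?s j)" for j using exhaust_3[of j] by auto
  then have "inspan m x" for x by (rule inspan_all)
  then show ?thesis using on basis_of_orth by blast
qed

end

definition flip :: "(3 \<Rightarrow> dmod) \<Rightarrow> (3 \<Rightarrow> dmod)" where "flip e = e(3 := - e 3)"

lemma flip_sum: "(\<Sum>i\<in>UNIV. c i *s flip e i) = (\<Sum>i\<in>UNIV. (c(3 := - c 3)) i *s e i)"
proof (rule sum.cong)
  fix i :: 3
  show "c i *s flip e i = (c(3 := - c 3)) i *s e i"
    by (cases "i = 3") (auto simp: flip_def vec_eq_iff)
qed simp

lemma flip_basis: assumes "is_basis e" shows "is_basis (flip e)"
  unfolding is_basis_iff
proof (intro conjI allI impI)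
  fix x
  from assms obtain c where c: "x = (\<Sum>i\<in>UNIV. c i *s e i)" unfolding is_basis_iff inspan_def by blast
  have eq: "(c(3 := - c 3))(3 := - (c(3 := - c 3)) 3) = c" by auto
  have "x = (\<Sum>i\<in>UNIV. (c(3 := - c 3)) i *s flip e i)" by (simp only: flip_sum eq c)
  then show "inspan (flip e) x" unfolding inspan_def by blast
next
  fix c d :: "3 \<Rightarrow> dual"
  assume "(\<Sum>i\<in>UNIV. c i *s flip e i) = (\<Sum>i\<in>UNIV. d i *s flip e i)"
  then have "c(3 := - c 3) = d(3 := - d 3)" using assms unfolding flip_sum is_basis_iff by blast
  then have "(c(3 := - c 3)) i = (d(3 := - d 3)) i" for i by simp
  then have "c i = d i" for i by (metis fun_upd_apply minus_equation_iff)
  then show "c = d" by auto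
qed

context SP begin

lemma flip_orth: "orthonormal sp e \<Longrightarrow> orthonormal sp (flip e)"
  unfolding orthonormal_def flip_def by (auto simp: negL negR)

lemma compose_sum:
  fixes e b0 :: "3 \<Rightarrow> dmod"
  assumes "\<forall>k. b0 k = (\<Sum>l\<in>UNIV. B k l *s e l)"
  shows "(\<Sum>k\<in>UNIV. A k *s b0 k) = (\<Sum>l\<in>UNIV. (\<Sum>k\<in>UNIV. A k * B k l) *s e l)"
proof -
  have "(\<Sum>k\<in>UNIV. A k *s b0 k) $ n = (\<Sum>l\<in>UNIV. (\<Sum>k\<in>UNIV. A k * B k l) *s e l) $ n" for n
  proof -
    have "(\<Sum>k\<in>UNIV. A k *s b0 k) $ n = (\<Sum>k\<in>UNIV. A k * b0 k $ n)"
      by (simp add: lincomb_comp)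
    also have "\<dots> = (\<Sum>k\<in>UNIV. A k * (\<Sum>l\<in>UNIV. B k l * e l $ n))"
      using assms by (simp add: lincomb_comp)
    also have "\<dots> = (\<Sum>k\<in>UNIV. \<Sum>l\<in>UNIV. A k * B k l * e l $ n)"
      by (simp add: sum_distrib_left mult.assoc)
    also have "\<dots> = (\<Sum>l\<in>UNIV. \<Sum>k\<in>UNIV. A k * B k l * e l $ n)" by (rule sum.swap)
    also have "\<dots> = (\<Sum>l\<in>UNIV. (\<Sum>k\<in>UNIV. A k * B k l) *s e l) $ n"
      by (simp add: lincomb_comp sum_distrib_right)
    finally show ?thesis .
  qed
  then show ?thesis by (simp add: vec_eq_iff)
qed

lemma delta_sum: "(\<Sum>l\<in>UNIV. (if l = j then 1 else 0) *s e l) = (e j :: dmod)" for e :: "3 \<Rightarrow> dmod"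
proof -
  have "(\<Sum>l\<in>UNIV. (if l = j then 1 else 0) *s e l) = (\<Sum>l\<in>UNIV. if l = j then e l else 0)"
    by (rule sum.cong) auto
  also have "\<dots> = e j" by simp
  finally show ?thesis .
qed

lemma orient:
  assumes OR: "orientation OR" and e: "is_basis e"
  shows "e \<in> OR \<or> flip e \<in> OR"
proof -
  from OR obtain b0 where b0: "is_basis b0" and ORe: "OR = {b. is_basis b \<and> same_orient b0 b}"
    unfolding orientation_def by blast
  have "\<forall>j. \<exists>c. e j = (\<Sum>k\<in>UNIV. c k *s b0 k)" using b0 unfolding is_basis_iff inspan_def by blast
  then obtain A where A: "\<forall>j. e j = (\<Sum>k\<in>UNIV. A j k *s b0 k)" by metis
  have "\<forall>k. \<exists>c. b0 k = (\<Sum>l\<in>UNIV. c l *s e l)" using e unfolding is_basis_iff inspan_def by blast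
  then obtain B where B: "\<forall>k. b0 k = (\<Sum>l\<in>UNIV. B k l *s e l)" by metis
  have AB: "(\<lambda>l. \<Sum>k\<in>UNIV. A j k * B k l) = (\<lambda>l. if l = j then 1 else 0)" for j
  proof -
    have eq: "(\<Sum>l\<in>UNIV. (\<Sum>k\<in>UNIV. A j k * B k l) *s e l) = (\<Sum>l\<in>UNIV. (if l = j then 1 else 0) *s e l)"
      using compose_sum[OF B, of "A j"] A delta_sum by metis
    have u: "\<And>c d. (\<Sum>i\<in>UNIV. c i *s e i) = (\<Sum>i\<in>UNIV. d i *s e i) \<Longrightarrow> c = d"
      using e unfolding is_basis_iff by blast
    show ?thesis using u[OF eq] .
  qed
  define RA :: "real^3^3" where "RA = (\<chi> j k. dRe (A j k))"
  define RB :: "real^3^3" where "RB = (\<chi> j k. dRe (B j k))"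
  have "RA ** RB = mat 1"
  proof -
    have "(RA ** RB) $ j $ l = mat 1 $ j $ l" for j l
    proof -
      have "(RA ** RB) $ j $ l = dRe (\<Sum>k\<in>UNIV. A j k * B k l)"
        by (simp add: RA_def RB_def matrix_matrix_mult_def)
      also have "\<dots> = (if l = j then 1 else 0)" using fun_cong[OF AB[of j], of l] by simp
      finally show ?thesis by (simp add: mat_def)
    qed
    then show ?thesis by (simp add: vec_eq_iff)
  qed
  then have "det RA * det RB = 1" by (metis det_I det_mul)
  then have dne: "det RA \<noteq> 0" by auto
  show ?thesis
  proof (cases "det RA > 0")
    case True
    have "same_orient b0 e" unfolding same_orient_def
      by (rule exI[of _ "\<chi> j k. A j k"]) (use A True in \<open>simp add: RA_def\<close>)
    then show ?thesis using e ORe by auto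
  next
    case False
    with dne have neg: "det RA < 0" by auto
    define A2 :: "dual^3^3" where "A2 = (\<chi> j k. if j = 3 then - A j k else A j k)"
    have "flip e j = (\<Sum>k\<in>UNIV. A2 $ j $ k *s b0 k)" for j
    proof (cases "j = 3")
      case True
      have "- (\<Sum>k\<in>UNIV. A 3 k *s b0 k) = (\<Sum>k\<in>UNIV. (- A 3 k) *s b0 k)"
        by (simp add: vec_eq_iff lincomb_comp sum_negf)
      then show ?thesis using A True by (simp add: flip_def A2_def)
    next
      case False
      then show ?thesis using A by (simp add: flip_def A2_def)
    qed
    moreover have "det (\<chi> i j. dRe (A2 $ i $ j)) = - det RA"
      by (simp add: A2_def RA_def det_3)
    ultimately have "same_orient b0 (flip e)" unfolding same_orient_def using neg
      by (intro exI[of _ A2]) auto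
    then show ?thesis using flip_basis[OF e] ORe by auto
  qed
qed

lemma exists_pos_orth:
  assumes OR: "orientation OR" and e: "is_basis e" "orthonormal sp e"
  shows "\<exists>m. pos_orthonormal sp OR m \<and> (m = e \<or> m = flip e)"
  using orient[OF OR e(1)] flip_orth[OF e(2)] e(2)
  unfolding pos_orthonormal_def orthonormal_def by blast

end

locale CO = SP + fixes m :: "3 \<Rightarrow> dmod"
  assumes mb: "is_basis m" and mo: "orthonormal sp m"
begin

definition re :: "dmod \<Rightarrow> real^3" where "re x = (\<chi> i. dRe (sp x (m i)))"
definition du :: "dmod \<Rightarrow> real^3" where "du x = (\<chi> i. dDu (sp x (m i)))"
definition mk :: "real^3 \<Rightarrow> real^3 \<Rightarrow> dmod" where
  "mk a b = (\<Sum>i\<in>UNIV. Dual (a $ i) (b $ i) *s m i)"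

lemma expand: "x = (\<Sum>i\<in>UNIV. sp x (m i) *s m i)"
proof -
  obtain c where c: "x = (\<Sum>i\<in>UNIV. c i *s m i)" using mb unfolding is_basis_iff inspan_def by blast
  then have "sp x (m i) = c i" for i using coeff[OF mo] by simp
  then show ?thesis using c by simp
qed

lemma coords_eq: "coords m x = (\<lambda>i. sp x (m i))"
  unfolding coords_def
proof (rule the_equality)
  show "x = (\<Sum>i\<in>UNIV. sp x (m i) *s m i)" by (rule expand)
next
  fix c assume "x = (\<Sum>i\<in>UNIV. c i *s m i)"
  then show "c = (\<lambda>i. sp x (m i))" using coeff[OF mo] by auto
qed

lemma sp_coord: "sp x y = (\<Sum>i\<in>UNIV. sp x (m i) * sp y (m i))"
proof -
  have "sp x y = sp (\<Sum>i\<in>UNIV. sp x (m i) *s m i) y" using expand by metis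
  also have "\<dots> = (\<Sum>i\<in>UNIV. sp x (m i) * sp (m i) y)" by (simp add: sumL smL)
  finally show ?thesis by (simp add: sym[of "m _" y])
qed

lemma re_comp[simp]: "re x $ i = dRe (sp x (m i))" by (simp add: re_def)
lemma du_comp[simp]: "du x $ i = dDu (sp x (m i))" by (simp add: du_def)

lemma sp_re: "dRe (sp x y) = re x \<bullet> re y"
  by (subst sp_coord) (simp add: inner_vec_def)
lemma sp_du: "dDu (sp x y) = re x \<bullet> du y + du x \<bullet> re y"
  by (subst sp_coord) (simp add: inner_vec_def sum.distrib)

lemma eq_iff: "x = y \<longleftrightarrow> re x = re y \<and> du x = du y"
proof
  assume "re x = re y \<and> du x = du y"
  then have "sp x (m i) = sp y (m i)" for i by (auto simp: vec_eq_iff dual_eq_iff)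
  then show "x = y" using expand[of x] expand[of y] by simp
qed simp

lemma re_add[simp]: "re (x + y) = re x + re y" by (simp add: vec_eq_iff addL)
lemma du_add[simp]: "du (x + y) = du x + du y" by (simp add: vec_eq_iff addL)
lemma re_diff[simp]: "re (x - y) = re x - re y" by (simp add: vec_eq_iff diffL)
lemma du_diff[simp]: "du (x - y) = du x - du y" by (simp add: vec_eq_iff diffL)
lemma re_neg[simp]: "re (- x) = - re x" by (simp add: vec_eq_iff negL)
lemma du_neg[simp]: "du (- x) = - du x" by (simp add: vec_eq_iff negL)
lemma re_zero[simp]: "re 0 = 0" by (simp add: vec_eq_iff)
lemma du_zero[simp]: "du 0 = 0" by (simp add: vec_eq_iff)
lemma re_sm[simp]: "re (c *s x) = dRe c *\<^sub>R re x" by (simp add: vec_eq_iff smL)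
lemma du_sm[simp]: "du (c *s x) = dRe c *\<^sub>R du x + dDu c *\<^sub>R re x"
  by (simp add: vec_eq_iff smL)
lemma re_rsc[simp]: "re (rsc r x) = r *\<^sub>R re x" by (simp add: rsc_def)
lemma du_rsc[simp]: "du (rsc r x) = r *\<^sub>R du x" by (simp add: rsc_def)
lemma re_sum[simp]: "re (sum f A) = (\<Sum>i\<in>A. re (f i))"
  by (simp add: vec_eq_iff sumL sum_component)
lemma du_sum[simp]: "du (sum f A) = (\<Sum>i\<in>A. du (f i))"
  by (simp add: vec_eq_iff sumL sum_component)

lemma zero_iff: "x = 0 \<longleftrightarrow> re x = 0 \<and> du x = 0"
  using eq_iff[of x 0] by simp

lemma epsM_re: "x \<in> epsM \<longleftrightarrow> re x = 0"
  using pos0[of x] sp_re[of x x] by simp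

lemma sp_mk: "sp (mk a b) (m j) = Dual (a $ j) (b $ j)"
  unfolding mk_def by (rule coeff[OF mo])
lemma re_mk[simp]: "re (mk a b) = a"
  by (simp add: vec_eq_iff sp_mk)
lemma du_mk[simp]: "du (mk a b) = b"
  by (simp add: vec_eq_iff sp_mk)

lemma pi_eq: "pi x = pi y \<longleftrightarrow> re x = re y"
proof
  assume "pi x = pi y"
  moreover have "y \<in> pi y" by (simp add: pi_def epsM_re)
  ultimately have "y \<in> pi x" by simp
  then show "re x = re y" by (simp add: pi_def epsM_re)
next
  assume "re x = re y"
  then show "pi x = pi y" by (simp add: pi_def epsM_re)
qed

end

lemma inner_bv[simp]: "bv j \<bullet> (v::real^3) = v $ j" "v \<bullet> bv j = v $ j"
  using exhaust_3[of j] by (auto simp: inner_vec_def sum_3)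

lemma sum_bv: "(\<Sum>i\<in>UNIV. c i *\<^sub>R bv i) = ((\<chi> i. c i) :: real^3)"
  by (simp add: vec_eq_iff sum_component if_distrib cong: if_cong)

lemma sum_bv_cross: "(\<Sum>i\<in>UNIV. c i *\<^sub>R (d \<times> bv i)) = d \<times> ((\<chi> i. c i) :: real^3)"
  by (simp add: cross3_simps bv_def)

lemma skew_cross: "(x::real^3) \<bullet> (d \<times> y) + (d \<times> x) \<bullet> y = 0"
  by (simp add: cross3_simps)

context CO begin

definition Pset :: "real^3 \<Rightarrow> dmod set" where "Pset d = {y. du y = d \<times> re y}"

lemma Pset_in_E: "Pset d \<in> Eset sp"
proof -
  define b where "b i = mk (bv i) (d \<times> bv i)" for i
  define Lc where "Lc c = (\<Sum>i\<in>UNIV. rsc (c i) (b i))" for c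
  have reL: "re (Lc c) = (\<chi> i. c i)" for c by (simp add: Lc_def b_def sum_bv)
  have duL: "du (Lc c) = d \<times> (\<chi> i. c i)" for c by (simp add: Lc_def b_def sum_bv_cross)
  have ind: "\<forall>c. Lc c = 0 \<longrightarrow> (\<forall>i. c i = 0)"
  proof (intro allI impI)
    fix c i assume "Lc c = 0"
    then have "re (Lc c) $ i = 0" by simp
    then show "c i = 0" by (simp add: reL)
  qed
  have rng: "Pset d = range Lc"
  proof
    show "Pset d \<subseteq> range Lc"
    proof
      fix y assume "y \<in> Pset d"
      then have "y = Lc (\<lambda>i. re y $ i)" by (simp del: re_comp du_comp add: eq_iff reL duL Pset_def)
      then show "y \<in> range Lc" by blast
    qed
  next
    show "range Lc \<subseteq> Pset d" by (auto simp: Pset_def reL duL)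
  qed
  have du0: "\<forall>x\<in>Pset d. \<forall>y\<in>Pset d. dDu (sp x y) = 0"
    by (simp add: Pset_def sp_du skew_cross)
  have cap: "Pset d \<inter> epsM = {0}"
  proof
    show "Pset d \<inter> epsM \<subseteq> {0}" by (auto simp: Pset_def epsM_re zero_iff)
    show "{0} \<subseteq> Pset d \<inter> epsM" by (auto simp: Pset_def epsM_re)
  qed
  show ?thesis unfolding Eset_def using ind rng du0 cap
    by (intro CollectI conjI exI[of _ b]) (auto simp: Lc_def)
qed

lemma mem_Pset: "u \<in> Pset d \<longleftrightarrow> du u = d \<times> re u" by (simp add: Pset_def)

lemma E_Pset: assumes "P \<in> Eset sp" shows "\<exists>d. P = Pset d"
proof -
  have h: "(\<exists>b :: 3 \<Rightarrow> dmod.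
                    (\<forall>c. (\<Sum>i\<in>UNIV. rsc (c i) (b i)) = 0 \<longrightarrow> (\<forall>i. c i = 0)) \<and>
                    P = range (\<lambda>c. \<Sum>i\<in>UNIV. rsc (c i) (b i))) \<and>
                 (\<forall>x\<in>P. \<forall>y\<in>P. dDu (sp x y) = 0) \<and>
                 P \<inter> epsM = {0}" using assms unfolding Eset_def by (rule CollectD)
  then have du0: "\<forall>x\<in>P. \<forall>y\<in>P. dDu (sp x y) = 0" and cap: "P \<inter> epsM = {0}" by simp_all
  from h have "\<exists>b :: 3 \<Rightarrow> dmod.
                    (\<forall>c. (\<Sum>i\<in>UNIV. rsc (c i) (b i)) = 0 \<longrightarrow> (\<forall>i. c i = 0)) \<and>
                    P = range (\<lambda>c. \<Sum>i\<in>UNIV. rsc (c i) (b i))" by (rule conjunct1)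
  then obtain b :: "3 \<Rightarrow> dmod" where bb: "(\<forall>c. (\<Sum>i\<in>UNIV. rsc (c i) (b i)) = 0 \<longrightarrow> (\<forall>i. c i = 0)) \<and>
                    P = range (\<lambda>c. \<Sum>i\<in>UNIV. rsc (c i) (b i))" by (rule exE)
  then have ind: "\<forall>c. (\<Sum>i\<in>UNIV. rsc (c i) (b i)) = 0 \<longrightarrow> (\<forall>i. c i = 0)"
    and P: "P = range (\<lambda>c. \<Sum>i\<in>UNIV. rsc (c i) (b i))" by simp_all
  define Lc where "Lc c = (\<Sum>i\<in>UNIV. rsc (c i) (b i))" for c
  have reL: "re (Lc c) = (\<Sum>i\<in>UNIV. c i *\<^sub>R re (b i))" for c by (simp add: Lc_def)
  have duL: "du (Lc c) = (\<Sum>i\<in>UNIV. c i *\<^sub>R du (b i))" for c by (simp add: Lc_def)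
  have inP: "y \<in> P \<longleftrightarrow> (\<exists>c. y = Lc c)" for y unfolding P Lc_def by auto
  have add: "Lc c + Lc c' = Lc (\<lambda>i. c i + c' i)" for c c'
    by (simp add: eq_iff reL duL sum.distrib scaleR_add_left)
  have smul: "rsc r (Lc c) = Lc (\<lambda>i. r * c i)" for r c
    by (simp add: eq_iff reL duL scaleR_sum_right)
  have Padd: "x \<in> P \<Longrightarrow> y \<in> P \<Longrightarrow> x + y \<in> P" for x y using add inP by metis
  have Psm: "x \<in> P \<Longrightarrow> rsc r x \<in> P" for x r using smul inP by metis
  have zero_of: "x \<in> P \<Longrightarrow> re x = 0 \<Longrightarrow> x = 0" for x using cap epsM_re by blast
  have same: "x \<in> P \<Longrightarrow> y \<in> P \<Longrightarrow> re x = re y \<Longrightarrow> x = y" for x y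
  proof -
    assume xy: "x \<in> P" "y \<in> P" "re x = re y"
    have "x + rsc (-1) y \<in> P" using xy Padd Psm by blast
    moreover have "re (x + rsc (-1) y) = 0" using xy by simp
    ultimately have "x + rsc (-1) y = 0" using zero_of by blast
    then have "re x + (- 1) *\<^sub>R re y = 0 \<and> du x + (- 1) *\<^sub>R du y = 0" by (simp add: zero_iff)
    then show "x = y" by (simp add: eq_iff)
  qed
  define L where "L v = (\<Sum>i\<in>UNIV. (v $ i) *\<^sub>R re (b i))" for v :: "real^3"
  have linL: "linear L"
    by (rule linearI) (simp_all add: L_def scaleR_add_left sum.distrib scaleR_sum_right)
  have "inj L"
  proof -
    have "\<forall>v. L v = 0 \<longrightarrow> v = 0"
    proof (intro allI impI)
      fix v assume "L v = 0"
      then have "re (Lc (\<lambda>i. v $ i)) = 0" by (simp add: reL L_def)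
      moreover have "Lc (\<lambda>i. v $ i) \<in> P" using inP by blast
      ultimately have "Lc (\<lambda>i. v $ i) = 0" using zero_of by blast
      then have "\<forall>i. v $ i = 0" using ind unfolding Lc_def by blast
      then show "v = 0" by (simp add: vec_eq_iff)
    qed
    then show ?thesis using linear_injective_0[OF linL] by blast
  qed
  then have "surj L" using linL by (intro linear_injective_imp_surjective) simp_all
  have onto: "\<exists>y\<in>P. re y = r" for r
  proof -
    obtain v where "r = L v" using \<open>surj L\<close> by (metis surjD)
    then have "re (Lc (\<lambda>i. v $ i)) = r" by (simp add: reL L_def)
    then show ?thesis using inP by blast
  qed
  have "\<forall>k::3. \<exists>y. y \<in> P \<and> re y = bv k" using onto by blast
  then obtain y :: "3 \<Rightarrow> dmod" where "\<forall>k. y k \<in> P \<and> re (y k) = bv k" by (rule choice[THEN exE])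
  then have yP: "\<And>k. y k \<in> P" and yr: "\<And>k. re (y k) = bv k" by simp_all
  define s where "s k = du (y k)" for k
  have sk: "s k $ j + s j $ k = 0" for j k
  proof -
    have "dDu (sp (y j) (y k)) = 0" using du0 yP by blast
    then show ?thesis by (simp add: sp_du yr s_def add.commute)
  qed
  define d :: "real^3" where "d = vector [s 2 $ 3, s 3 $ 1, s 1 $ 2]"
  have sd: "s k = d \<times> bv k" for k
  proof -
    have a: "s k $ k = 0" for k using sk[of k k] by simp
    have "s k $ i = (d \<times> bv k) $ i" for i
      using exhaust_3[of k] exhaust_3[of i] a sk
      by (auto simp: d_def cross3_def bv_def vector_def)
         (metis add.commute add_eq_0_iff)+
    then show ?thesis by (simp add: vec_eq_iff)
  qed
  have duP: "du x = d \<times> re x" if xP: "x \<in> P" for x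
  proof -
    define x' where "x' = rsc (re x $ 1) (y 1) + rsc (re x $ 2) (y 2) + rsc (re x $ 3) (y 3)"
    have "x' \<in> P" unfolding x'_def using Padd Psm yP by blast
    moreover have rx: "re x' = re x" unfolding x'_def
      by (simp del: re_comp add: yr vec_eq_iff forall_3)
    ultimately have "x' = x" using same xP by blast
    then have "du x = du x'" by simp
    also have "\<dots> = d \<times> re x'" unfolding x'_def
      by (simp del: re_comp du_comp add: s_def[symmetric] sd yr cross_add_right cross_mult_right)
    finally show ?thesis using rx by simp
  qed
  have "P = Pset d"
  proof
    show "P \<subseteq> Pset d" using duP by (auto simp: Pset_def)
  next
    show "Pset d \<subseteq> P"
    proof
      fix z assume z: "z \<in> Pset d"
      obtain x where x: "x \<in> P" "re x = re z" using onto by blast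
      then have "du x = du z" using duP z by (simp add: Pset_def)
      then have "x = z" using x eq_iff by blast
      then show "z \<in> P" using x by simp
    qed
  qed
  then show ?thesis by blast
qed

end

context SP begin

lemma unitpart_ex1: assumes z: "z \<notin> epsM"
  shows "\<exists>!u. \<exists>a b. a > 0 \<and> z = Dual a b *s u \<and> sp u u = 1"
proof (rule ex1I)
  let ?s = "dsqrt (sp z z)"
  have p: "dRe (sp z z) > 0" using posne z .
  show "\<exists>a b. a > 0 \<and> z = Dual a b *s nrm z \<and> sp (nrm z) (nrm z) = 1"
  proof (intro exI conjI)
    show "dRe ?s > 0" using dsqrt_pos[OF p] .
    show "z = Dual (dRe ?s) (dDu ?s) *s nrm z" using nrm_back[OF z] by simp
    show "sp (nrm z) (nrm z) = 1" using nrm_unit[OF z] .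
  qed
next
  fix u assume "\<exists>a b. a > 0 \<and> z = Dual a b *s u \<and> sp u u = 1"
  then obtain a b where u: "a > 0" "z = Dual a b *s u" "sp u u = 1" by blast
  let ?s = "dsqrt (sp z z)"
  have p: "dRe (sp z z) > 0" using posne z .
  have e1: "sp z z = Dual a b * Dual a b" using u by (simp add: smL smR)
  have e2: "sp z z = ?s * ?s" using dsqrt_sq[OF p] by simp
  have pos2: "dRe ?s > 0" using dsqrt_pos[OF p] .
  define r where "r = dRe ?s"
  define q where "q = dDu ?s"
  have sdef: "?s = Dual r q" by (simp add: r_def q_def dual_eq_iff)
  have "a * a = r * r" "a * b + b * a = r * q + q * r"
    using arg_cong[OF trans[OF e1[symmetric] e2], of dRe] arg_cong[OF trans[OF e1[symmetric] e2], of dDu]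
    unfolding sdef by (simp_all add: algebra_simps)
  moreover have r0: "r > 0" using pos2 r_def by simp
  ultimately have ar: "a = r" and bq: "b = q"
  proof -
    have "(a - r) * (a + r) = 0" using \<open>a * a = r * r\<close> by (simp add: algebra_simps)
    then show ar: "a = r" using u(1) r0 by auto
    show "b = q" using \<open>a * b + b * a = r * q + q * r\<close> ar r0 by (simp add: algebra_simps)
  qed
  have "Dual a b *s u = Dual a b *s nrm z"
    using u(2) nrm_back[OF z] sdef ar bq by simp
  then show "u = nrm z" using smult_cancel[of "Dual a b"] u(1) by simp
qed

lemma unitpart_prop: assumes z: "z \<notin> epsM"
  shows "\<exists>a b. a > 0 \<and> z = Dual a b *s unitpart sp z \<and> sp (unitpart sp z) (unitpart sp z) = 1"
  unfolding unitpart_def by (rule theI'[OF unitpart_ex1[OF z]])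

end

context CO begin

definition crs :: "dmod \<Rightarrow> dmod \<Rightarrow> dmod" where
  "crs x y = (\<Sum>k\<in>UNIV. (\<Sum>i\<in>UNIV. \<Sum>j\<in>UNIV.
             coords m x i * coords m y j * Dual (levi i j k) 0) *s m k)"

lemma crs_sp: "sp (crs x y) z = (\<Sum>k\<in>UNIV. (\<Sum>i\<in>UNIV. \<Sum>j\<in>UNIV.
             sp x (m i) * sp y (m j) * Dual (levi i j k) 0) * sp z (m k))"
proof -
  have "sp (crs x y) z = (\<Sum>k\<in>UNIV. (\<Sum>i\<in>UNIV. \<Sum>j\<in>UNIV.
             sp x (m i) * sp y (m j) * Dual (levi i j k) 0) * sp (m k) z)"
    by (simp add: crs_def coords_eq sumL smL)
  also have "\<dots> = (\<Sum>k\<in>UNIV. (\<Sum>i\<in>UNIV. \<Sum>j\<in>UNIV.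
             sp x (m i) * sp y (m j) * Dual (levi i j k) 0) * sp z (m k))"
    by (rule sum.cong) (auto intro: arg_cong[OF sym])
  finally show ?thesis .
qed

lemma trip_re: "dRe (sp (crs x y) z) = re x \<bullet> (re y \<times> re z)"
  by (simp add: crs_sp sum_3 cross3_simps)

lemma trip_du: "dDu (sp (crs x y) z) = du x \<bullet> (re y \<times> re z) + re x \<bullet> (du y \<times> re z) + re x \<bullet> (re y \<times> du z)"
  by (simp add: crs_sp sum_3 cross3_simps)

lemma trip_scale: "sp (crs (a *s x) (b *s y)) (c *s z) = a * b * c * sp (crs x y) z"
  by (simp add: crs_sp smL sum_3 algebra_simps)

end

lemma dot_cross_bv: "(\<chi> i. v \<bullet> (d \<times> bv i)) = - (d \<times> (v::real^3))"
  by (simp add: cross3_simps bv_def forall_3)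

lemma cross_bv_zero: "(\<forall>i. v \<times> bv i = 0) \<Longrightarrow> (v::real^3) = 0"
  by (simp add: cross3_simps bv_def forall_3)

lemma levi_cross: "(\<Sum>k\<in>UNIV. levi i j k * d k) = ((\<chi> k. d k) \<times> bv i) $ j"
  using exhaust_3[of i] exhaust_3[of j] by (auto simp: sum_3 cross3_def bv_def vector_def)

context CO begin

lemma eA_exists: assumes OR: "orientation OR"
  shows "\<exists>e. pos_orthonormal sp OR e \<and> (\<forall>i. e i \<in> Pset dA)"
proof -
  define e where "e i = mk (bv i) (dA \<times> bv i)" for i
  have eP: "e i \<in> Pset dA" for i by (simp add: e_def mem_Pset)
  have on: "orthonormal sp e" unfolding orthonormal_def
  proof (intro allI)
    fix i j
    show "sp (e i) (e j) = (if i = j then 1 else 0)"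
      using skew_cross[of "bv i" dA "bv j"] inner_bv(1)[of i "bv j"]
      by (simp add: dual_eq_iff sp_re sp_du e_def del: re_comp du_comp inner_bv)
  qed
  have "inspan e x" for x
  proof -
    have "x = (\<Sum>i\<in>UNIV. sp x (e i) *s e i)"
    proof (subst eq_iff, intro conjI)
      show "re x = re (\<Sum>i\<in>UNIV. sp x (e i) *s e i)"
        by (simp add: sp_re e_def sum_bv del: re_comp du_comp)
      have "du (\<Sum>i\<in>UNIV. sp x (e i) *s e i) =
         (\<Sum>i\<in>UNIV. (re x $ i) *\<^sub>R (dA \<times> bv i)) + (\<Sum>i\<in>UNIV. (re x \<bullet> (dA \<times> bv i) + du x $ i) *\<^sub>R bv i)"
        by (simp add: sp_re sp_du e_def sum.distrib del: re_comp du_comp)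
      also have "\<dots> = dA \<times> re x + ((\<chi> i. re x \<bullet> (dA \<times> bv i)) + du x)"
        by (simp add: sum_bv sum_bv_cross scaleR_add_left sum.distrib del: re_comp du_comp)
      also have "\<dots> = du x" by (simp add: dot_cross_bv del: re_comp du_comp)
      finally show "du x = du (\<Sum>i\<in>UNIV. sp x (e i) *s e i)" by simp
    qed
    then show ?thesis unfolding inspan_def by (intro exI[where x="\<lambda>i. sp x (e i)"])
  qed
  then have eb: "is_basis e" using basis_of_orth[OF on] by blast
  obtain m' where m': "pos_orthonormal sp OR m'" "m' = e \<or> m' = flip e"
    using exists_pos_orth[OF OR eb on] by blast
  have "m' i \<in> Pset dA" for i
  proof (cases "m' = e")
    case True then show ?thesis using eP by simp
  next
    case False
    then have "m' = flip e" using m' by blast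
    then show ?thesis using eP by (auto simp: flip_def mem_Pset)
  qed
  then show ?thesis using m' by blast
qed

lemma lift_eq: "lift (Pset dB) v = mk (re v) (dB \<times> re v)"
  unfolding lift_def
proof (rule the_equality)
  show "mk (re v) (dB \<times> re v) \<in> Pset dB \<and> pi (mk (re v) (dB \<times> re v)) = pi v"
    by (simp add: mem_Pset pi_eq)
next
  fix y assume "y \<in> Pset dB \<and> pi y = pi v"
  then show "y = mk (re v) (dB \<times> re v)" by (simp add: mem_Pset pi_eq eq_iff)
qed

lemma diffE_char: assumes OR: "orientation OR"
  shows "(\<exists>t. diffE sp OR (Pset dB) (Pset dA) = pi (rsc t w)) \<longleftrightarrow> (\<exists>t. dB - dA = t *\<^sub>R re w)"
proof -
  define eA where "eA = (SOME e. pos_orthonormal sp OR e \<and> (\<forall>i. e i \<in> Pset dA))"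
  have eAp: "pos_orthonormal sp OR eA \<and> (\<forall>i. eA i \<in> Pset dA)"
    using someI_ex[OF eA_exists[OF OR, of dA]] unfolding eA_def .
  define x where "x i = re (eA i)" for i
  have xo: "x i \<bullet> x j = (if i = j then 1 else 0)" for i j
    using eAp unfolding pos_orthonormal_def x_def
    by (metis sp_re dual_simps(9) dual_simps(11))
  have dux: "du (eA i) = dA \<times> x i" for i using eAp by (simp add: x_def mem_Pset del: re_comp du_comp)
  define Q :: "real^3^3" where "Q = (\<chi> r c. x c $ r)"
  have Qv: "Q *v v = (\<Sum>c\<in>UNIV. (v $ c) *\<^sub>R x c)" for v
    by (simp add: Q_def matrix_vector_mult_def vec_eq_iff sum_component mult.commute)
  have Qbv: "Q *v bv i = x i" for i
    using exhaust_3[of i] by (auto simp: Qv sum_3)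
  have "transpose Q ** Q = mat 1"
  proof -
    have "(\<Sum>k\<in>UNIV. x i $ k * x j $ k) = (if i = j then 1 else 0)" for i j
      using xo[of i j] by (simp add: inner_vec_def)
    then show ?thesis
      by (simp add: Q_def matrix_matrix_mult_def transpose_def mat_def vec_eq_iff)
  qed
  then have oQ: "orthogonal_matrix Q"
    unfolding orthogonal_matrix_def using matrix_left_right_inverse by blast
  define \<sigma> where "\<sigma> = det Q"
  have sg: "\<sigma> = 1 \<or> \<sigma> = -1" unfolding \<sigma>_def by (rule det_orthogonal_matrix[OF oQ])
  have QQ1: "Q *v (transpose Q *v v) = v" for v
  proof -
    have "Q *v (transpose Q *v v) = (Q ** transpose Q) *v v" by (simp only: matrix_vector_mul_assoc)
    also have "\<dots> = v" using oQ by (simp add: orthogonal_matrix_def)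
    finally show ?thesis .
  qed
  have QQ2: "transpose Q *v (Q *v v) = v" for v
  proof -
    have "transpose Q *v (Q *v v) = (transpose Q ** Q) *v v" by (simp only: matrix_vector_mul_assoc)
    also have "\<dots> = v" using oQ by (simp add: orthogonal_matrix_def)
    finally show ?thesis .
  qed
  note QQ = QQ1 QQ2
  define g where "g = transpose Q *v (dB - dA)"
  have Qg: "Q *v g = dB - dA" using QQ g_def by simp
  define Cond where "Cond d = (\<forall>i. lift (Pset dB) (eA i) =
                 eA i + eps *s (\<Sum>j\<in>UNIV. \<Sum>k\<in>UNIV. rsc (levi i j k * d k) (eA j)))" for d
  have Cond_iff: "Cond d \<longleftrightarrow> (\<chi> k. d k) = \<sigma> *\<^sub>R g" for d
  proof -
    define dv :: "real^3" where "dv = (\<chi> k. d k)"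
    have sumx: "(\<Sum>j\<in>UNIV. \<Sum>k\<in>UNIV. (levi i j k * d k) *\<^sub>R x j) = Q *v (dv \<times> bv i)" for i
    proof -
      have "(\<Sum>j\<in>UNIV. \<Sum>k\<in>UNIV. (levi i j k * d k) *\<^sub>R x j) =
            (\<Sum>j\<in>UNIV. (\<Sum>k\<in>UNIV. levi i j k * d k) *\<^sub>R x j)"
        by (simp add: scaleR_sum_left)
      also have "\<dots> = Q *v (dv \<times> bv i)" by (simp add: Qv levi_cross dv_def)
      finally show ?thesis .
    qed
    have "Cond d \<longleftrightarrow> (\<forall>i. dB \<times> x i = dA \<times> x i + Q *v (dv \<times> bv i))"
      unfolding Cond_def lift_eq
      by (simp add: eq_iff dux sumx[symmetric] x_def del: re_comp du_comp)
    also have "\<dots> \<longleftrightarrow> (\<forall>i. \<sigma> *\<^sub>R (Q *v (g \<times> bv i)) = Q *v (dv \<times> bv i))"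
    proof -
      have "(dB - dA) \<times> x i = \<sigma> *\<^sub>R (Q *v (g \<times> bv i))" for i
        using cross_orthogonal_matrix[OF oQ, of g "bv i"] Qg Qbv \<sigma>_def by simp
      then show ?thesis by (simp add: Cross3.left_diff_distrib algebra_simps)
    qed
    also have "\<dots> \<longleftrightarrow> (\<forall>i. (\<sigma> *\<^sub>R g - dv) \<times> bv i = 0)"
    proof -
      have "\<sigma> *\<^sub>R (Q *v (g \<times> bv i)) = Q *v (dv \<times> bv i) \<longleftrightarrow> (\<sigma> *\<^sub>R g - dv) \<times> bv i = 0" for i
      proof -
        have "\<sigma> *\<^sub>R (Q *v (g \<times> bv i)) - Q *v (dv \<times> bv i) = Q *v ((\<sigma> *\<^sub>R g - dv) \<times> bv i)"
          by (simp add: Cross3.left_diff_distrib cross_mult_left matrix_vector_mult_diff_distrib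
              matrix_vector_mult_scaleR)
        moreover have "Q *v v = 0 \<longleftrightarrow> v = 0" for v using QQ(2)[of v] by auto
        ultimately show ?thesis by (metis eq_iff_diff_eq_0)
      qed
      then show ?thesis by simp
    qed
    also have "\<dots> \<longleftrightarrow> dv = \<sigma> *\<^sub>R g"
      using cross_bv_zero[of "\<sigma> *\<^sub>R g - dv"] by auto
    finally show ?thesis by (simp add: dv_def)
  qed
  have theD: "(THE d. Cond d) = (\<lambda>k. \<sigma> * g $ k)"
  proof (rule the_equality)
    show "Cond (\<lambda>k. \<sigma> * g $ k)" by (simp add: Cond_iff vec_eq_iff)
  next
    fix d assume "Cond d"
    then show "d = (\<lambda>k. \<sigma> * g $ k)" by (auto simp: Cond_iff vec_eq_iff)
  qed
  have diffE_eq: "diffE sp OR (Pset dB) (Pset dA) = pi (\<Sum>k\<in>UNIV. rsc (\<sigma> * g $ k) (eA k))"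
    unfolding diffE_def Let_def eA_def[symmetric] using theD unfolding Cond_def by simp
  have reD: "re (\<Sum>k\<in>UNIV. rsc (\<sigma> * g $ k) (eA k)) = \<sigma> *\<^sub>R (dB - dA)"
  proof -
    have "re (\<Sum>k\<in>UNIV. rsc (\<sigma> * g $ k) (eA k)) = \<sigma> *\<^sub>R (Q *v g)"
      by (simp add: Qv x_def scaleR_sum_right del: re_comp du_comp)
    then show ?thesis using Qg by simp
  qed
  have "(\<exists>t. diffE sp OR (Pset dB) (Pset dA) = pi (rsc t w)) \<longleftrightarrow> (\<exists>t. \<sigma> *\<^sub>R (dB - dA) = t *\<^sub>R re w)"
    unfolding diffE_eq pi_eq reD by simp
  also have "\<dots> \<longleftrightarrow> (\<exists>t. dB - dA = t *\<^sub>R re w)"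
  proof
    assume "\<exists>t. \<sigma> *\<^sub>R (dB - dA) = t *\<^sub>R re w"
    then obtain t where "\<sigma> *\<^sub>R (dB - dA) = t *\<^sub>R re w" by blast
    then have "dB - dA = (\<sigma> * t) *\<^sub>R re w" using sg
      by (metis (no_types, lifting) minus_diff_eq mult_minus_left mult_1 scaleR_minus_left scaleR_one scaleR_scaleR)
    then show "\<exists>t. dB - dA = t *\<^sub>R re w" by blast
  next
    assume "\<exists>t. dB - dA = t *\<^sub>R re w"
    then obtain t where "dB - dA = t *\<^sub>R re w" by blast
    then have "\<sigma> *\<^sub>R (dB - dA) = (\<sigma> * t) *\<^sub>R re w" by simp
    then show "\<exists>t. \<sigma> *\<^sub>R (dB - dA) = t *\<^sub>R re w" by blast
  qed
  finally show ?thesis .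
qed

end

lemma par_lemma: "(x::real^3) \<bullet> w = 0 \<Longrightarrow> y \<bullet> w = 0 \<Longrightarrow> (w \<bullet> w) *\<^sub>R (x \<times> y) = ((x \<times> y) \<bullet> w) *\<^sub>R w"
  by (simp add: cross3_simps forall_3 del: vector_3; intro conjI; algebra)

lemma decomp_lemma: "(a::real^3) \<bullet> a = 1 \<Longrightarrow> w \<bullet> a = 0 \<Longrightarrow> b \<bullet> a = 0 \<Longrightarrow>
   (w \<bullet> w) *\<^sub>R b = (b \<bullet> w) *\<^sub>R w + (b \<bullet> (w \<times> a)) *\<^sub>R (w \<times> a)"
  by (simp add: cross3_simps forall_3 del: vector_3; intro conjI; algebra)

lemma plane_id: "((x::real^3) \<bullet> (y \<times> z)) *\<^sub>R w = (x \<bullet> w) *\<^sub>R (y \<times> z) + (y \<bullet> w) *\<^sub>R (z \<times> x) + (z \<bullet> w) *\<^sub>R (x \<times> y)"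
  by (simp add: cross3_simps forall_3)

lemma trace_id: "(p \<times> x) \<bullet> (y \<times> z) + x \<bullet> ((p \<times> y) \<times> z) + x \<bullet> (y \<times> (p \<times> (z::real^3))) = 0"
  by (simp add: cross3_simps)

definition onl :: "real^3 \<Rightarrow> real^3 \<Rightarrow> real^3 \<Rightarrow> real^3 \<Rightarrow> bool" where
  "onl p w a b \<longleftrightarrow> a \<bullet> w = 0 \<and> (\<exists>q t. b = q \<times> a \<and> q - p = t *\<^sub>R w)"

lemma onl_lemma:
  fixes a b p w :: "real^3"
  assumes "a \<bullet> a = 1" "w \<bullet> a = 0" "b \<bullet> a = 0" "w \<noteq> 0" "p \<bullet> w = 0" "(p \<times> a) \<bullet> w = b \<bullet> w"
  shows "b = (p + (b \<bullet> (w \<times> a) / (w \<bullet> w)) *\<^sub>R w) \<times> a"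
proof -
  define N where "N = w \<bullet> w"
  have N0: "N \<noteq> 0" using assms(4) by (simp add: N_def)
  have aw: "a \<bullet> w = 0" using assms(2) by (simp add: inner_commute)
  have "N *\<^sub>R (p \<times> a) = (b \<bullet> w) *\<^sub>R w"
    using par_lemma[OF assms(5) aw] assms(6) by (simp add: N_def)
  then have "N *\<^sub>R ((p + (b \<bullet> (w \<times> a) / N) *\<^sub>R w) \<times> a) = (b \<bullet> w) *\<^sub>R w + (b \<bullet> (w \<times> a)) *\<^sub>R (w \<times> a)"
    using N0 by (simp add: cross_add_left cross_mult_left scaleR_add_right)
  also have "\<dots> = N *\<^sub>R b" using decomp_lemma[OF assms(1-3)] by (simp add: N_def)
  finally show ?thesis using N0 by (simp add: N_def)
qed

lemma onl_intro:
  fixes a b p w :: "real^3"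
  assumes "a \<bullet> a = 1" "a \<bullet> w = 0" "a \<bullet> b = 0" "w \<noteq> 0" "p \<bullet> w = 0" "(p \<times> a) \<bullet> w = b \<bullet> w"
  shows "onl p w a b"
proof -
  have "b = (p + (b \<bullet> (w \<times> a) / (w \<bullet> w)) *\<^sub>R w) \<times> a"
    using onl_lemma assms by (simp add: inner_commute)
  then show ?thesis unfolding onl_def using assms(2) by (intro conjI exI[of _ "p + (b \<bullet> (w \<times> a) / (w \<bullet> w)) *\<^sub>R w"]) auto
qed

lemma core_R':
  fixes a1 a2 a3 b1 b2 b3 :: "real^3"
  assumes n: "a1 \<bullet> a1 = 1" "a2 \<bullet> a2 = 1" "a3 \<bullet> a3 = 1"
    and o: "a1 \<bullet> b1 = 0" "a2 \<bullet> b2 = 0" "a3 \<bullet> b3 = 0"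
    and w0: "a1 \<times> a2 \<noteq> 0"
    and T0: "a1 \<bullet> (a2 \<times> a3) = 0"
    and T1: "b1 \<bullet> (a2 \<times> a3) + a1 \<bullet> (b2 \<times> a3) + a1 \<bullet> (a2 \<times> b3) = 0"
  shows "\<exists>p w. w \<noteq> 0 \<and> onl p w a1 b1 \<and> onl p w a2 b2 \<and> onl p w a3 b3"
proof -
  define w where "w = a1 \<times> a2"
  define N where "N = w \<bullet> w"
  have wne: "w \<noteq> 0" using w0 w_def by simp
  have N0: "N \<noteq> 0" using wne by (simp add: N_def)
  have aw1: "a1 \<bullet> w = 0" and aw2: "a2 \<bullet> w = 0" by (simp_all add: w_def dot_cross_self)
  have aw3: "a3 \<bullet> w = 0" using T0 unfolding w_def by (simp add: cross3_simps)
  define p where "p = (1 / N) *\<^sub>R ((b2 \<bullet> w) *\<^sub>R a1 - (b1 \<bullet> w) *\<^sub>R a2)"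
  have pw: "p \<bullet> w = 0" by (simp add: p_def inner_diff_left aw1 aw2)
  have k1: "(p \<times> a1) \<bullet> w = b1 \<bullet> w"
  proof -
    have "p \<times> a1 = (1 / N) *\<^sub>R ((b1 \<bullet> w) *\<^sub>R w)"
      by (simp add: p_def w_def cross_mult_left Cross3.left_diff_distrib cross_skew[of a2 a1])
    then show ?thesis using N0 by (simp add: N_def)
  qed
  have k2: "(p \<times> a2) \<bullet> w = b2 \<bullet> w"
  proof -
    have "p \<times> a2 = (1 / N) *\<^sub>R ((b2 \<bullet> w) *\<^sub>R w)"
      by (simp add: p_def w_def cross_mult_left Cross3.left_diff_distrib)
    then show ?thesis using N0 by (simp add: N_def)
  qed
  have k3: "(p \<times> a3) \<bullet> w = b3 \<bullet> w"
  proof -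
    have e1: "N * (b1 \<bullet> (a2 \<times> a3)) = ((a2 \<times> a3) \<bullet> w) * (b1 \<bullet> w)"
      using arg_cong[OF par_lemma[OF aw2 aw3], of "\<lambda>v. b1 \<bullet> v"] by (simp add: N_def)
    have e2: "N * (a1 \<bullet> (b2 \<times> a3)) = ((a3 \<times> a1) \<bullet> w) * (b2 \<bullet> w)"
    proof -
      have "a1 \<bullet> (b2 \<times> a3) = b2 \<bullet> (a3 \<times> a1)" by (simp add: cross3_simps)
      then show ?thesis
        using arg_cong[OF par_lemma[OF aw3 aw1], of "\<lambda>v. b2 \<bullet> v"] by (simp add: N_def)
    qed
    have e3: "a1 \<bullet> (a2 \<times> b3) = b3 \<bullet> w" unfolding w_def by (simp add: cross3_simps)
    have "N * 0 = N * (b1 \<bullet> (a2 \<times> a3) + a1 \<bullet> (b2 \<times> a3) + a1 \<bullet> (a2 \<times> b3))" using T1 by simp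
    then have sumz: "((a2 \<times> a3) \<bullet> w) * (b1 \<bullet> w) + ((a3 \<times> a1) \<bullet> w) * (b2 \<bullet> w) + N * (b3 \<bullet> w) = 0"
      using e1 e2 e3 by (simp add: distrib_left)
    have "N * ((p \<times> a3) \<bullet> w) = (b2 \<bullet> w) * ((a1 \<times> a3) \<bullet> w) - (b1 \<bullet> w) * ((a2 \<times> a3) \<bullet> w)"
      using N0 by (simp add: p_def cross_mult_left Cross3.left_diff_distrib inner_diff_left)
    also have "\<dots> = N * (b3 \<bullet> w)"
      using sumz cross_skew[of a1 a3] by (simp add: algebra_simps)
    finally show ?thesis using N0 by simp
  qed
  show ?thesis
    using onl_intro[OF n(1) aw1 o(1) wne pw k1] onl_intro[OF n(2) aw2 o(2) wne pw k2]
      onl_intro[OF n(3) aw3 o(3) wne pw k3] wne by blast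
qed


lemma plane_zero: "(x::real^3) \<bullet> w = 0 \<Longrightarrow> y \<bullet> w = 0 \<Longrightarrow> z \<bullet> w = 0 \<Longrightarrow> w \<noteq> 0 \<Longrightarrow> x \<bullet> (y \<times> z) = 0"
  using plane_id[of x y z w] by simp

lemma cross0_par: "(x::real^3) \<times> y = 0 \<Longrightarrow> y \<bullet> y = 1 \<Longrightarrow> \<exists>r. x = r *\<^sub>R y"
proof -
  assume h: "x \<times> y = 0" "y \<bullet> y = 1"
  have "y \<times> (x \<times> y) = (y \<bullet> y) *\<^sub>R x - (y \<bullet> x) *\<^sub>R y" by (rule Lagrange)
  then have "x = (y \<bullet> x) *\<^sub>R y" using h by simp
  then show ?thesis by blast
qed

lemma core:
  fixes a1 a2 a3 b1 b2 b3 :: "real^3"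
  assumes n: "a1 \<bullet> a1 = 1" "a2 \<bullet> a2 = 1" "a3 \<bullet> a3 = 1"
    and o: "a1 \<bullet> b1 = 0" "a2 \<bullet> b2 = 0" "a3 \<bullet> b3 = 0"
  shows "(a1 \<bullet> (a2 \<times> a3) = 0 \<and> b1 \<bullet> (a2 \<times> a3) + a1 \<bullet> (b2 \<times> a3) + a1 \<bullet> (a2 \<times> b3) = 0) \<longleftrightarrow>
    ((\<forall>x\<in>{a1, a2, a3}. \<forall>y\<in>{a1, a2, a3}. \<exists>r. x = r *\<^sub>R y) \<or>
     (\<exists>p w. w \<noteq> 0 \<and> onl p w a1 b1 \<and> onl p w a2 b2 \<and> onl p w a3 b3))"
proof
  assume T: "a1 \<bullet> (a2 \<times> a3) = 0 \<and> b1 \<bullet> (a2 \<times> a3) + a1 \<bullet> (b2 \<times> a3) + a1 \<bullet> (a2 \<times> b3) = 0"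
  show "(\<forall>x\<in>{a1, a2, a3}. \<forall>y\<in>{a1, a2, a3}. \<exists>r. x = r *\<^sub>R y) \<or>
     (\<exists>p w. w \<noteq> 0 \<and> onl p w a1 b1 \<and> onl p w a2 b2 \<and> onl p w a3 b3)"
  proof (cases "a1 \<times> a2 \<noteq> 0")
    case True
    then show ?thesis using core_R'[OF n o True] T by blast
  next
    case c1: False
    show ?thesis
    proof (cases "a1 \<times> a3 \<noteq> 0")
      case True
      have "a1 \<bullet> (a3 \<times> a2) = 0" using T by (simp add: cross3_simps)
      moreover have "b1 \<bullet> (a3 \<times> a2) + a1 \<bullet> (b3 \<times> a2) + a1 \<bullet> (a3 \<times> b2) = 0"
        using T by (simp add: cross3_simps)
      ultimately show ?thesis using core_R'[OF n(1) n(3) n(2) o(1) o(3) o(2) True] by blast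
    next
      case c2: False
      show ?thesis
      proof (cases "a2 \<times> a3 \<noteq> 0")
        case True
        have "a2 \<bullet> (a3 \<times> a1) = 0" using T by (simp add: cross3_simps)
        moreover have "b2 \<bullet> (a3 \<times> a1) + a2 \<bullet> (b3 \<times> a1) + a2 \<bullet> (a3 \<times> b1) = 0"
          using T by (simp add: cross3_simps)
        ultimately show ?thesis using core_R'[OF n(2) n(3) n(1) o(2) o(3) o(1) True] by blast
      next
        case c3: False
        have z: "a1 \<times> a2 = 0" "a1 \<times> a3 = 0" "a2 \<times> a3 = 0" using c1 c2 c3 by auto
        then have z': "a2 \<times> a1 = 0" "a3 \<times> a1 = 0" "a3 \<times> a2 = 0"
          by (metis cross_skew neg_equal_0_iff_equal)+
        have "\<forall>x\<in>{a1, a2, a3}. \<forall>y\<in>{a1, a2, a3}. \<exists>r. x = r *\<^sub>R y"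
          using z z' n cross0_par by (auto intro: exI[of _ 1])
        then show ?thesis by blast
      qed
    qed
  qed
next
  assume "(\<forall>x\<in>{a1, a2, a3}. \<forall>y\<in>{a1, a2, a3}. \<exists>r. x = r *\<^sub>R y) \<or>
     (\<exists>p w. w \<noteq> 0 \<and> onl p w a1 b1 \<and> onl p w a2 b2 \<and> onl p w a3 b3)"
  then show "a1 \<bullet> (a2 \<times> a3) = 0 \<and> b1 \<bullet> (a2 \<times> a3) + a1 \<bullet> (b2 \<times> a3) + a1 \<bullet> (a2 \<times> b3) = 0"
  proof
    assume "\<forall>x\<in>{a1, a2, a3}. \<forall>y\<in>{a1, a2, a3}. \<exists>r. x = r *\<^sub>R y"
    then obtain r s where rs: "a2 = r *\<^sub>R a1" "a3 = s *\<^sub>R a1" by blast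
    show ?thesis unfolding rs
      by (simp add: cross_mult_left cross_mult_right dot_cross_self)
  next
    assume "\<exists>p w. w \<noteq> 0 \<and> onl p w a1 b1 \<and> onl p w a2 b2 \<and> onl p w a3 b3"
    then obtain p w where w: "w \<noteq> 0" and l: "onl p w a1 b1" "onl p w a2 b2" "onl p w a3 b3" by blast
    from l obtain q1 t1 q2 t2 q3 t3 where aw: "a1 \<bullet> w = 0" "a2 \<bullet> w = 0" "a3 \<bullet> w = 0"
      and q: "b1 = q1 \<times> a1" "q1 - p = t1 *\<^sub>R w" "b2 = q2 \<times> a2" "q2 - p = t2 *\<^sub>R w"
        "b3 = q3 \<times> a3" "q3 - p = t3 *\<^sub>R w"
      unfolding onl_def by blast
    have b: "b1 = p \<times> a1 + t1 *\<^sub>R (w \<times> a1)" "b2 = p \<times> a2 + t2 *\<^sub>R (w \<times> a2)"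
      "b3 = p \<times> a3 + t3 *\<^sub>R (w \<times> a3)"
      using q by (metis cross_add_left cross_mult_left diff_add_cancel add.commute)+
    have wx: "(w \<times> a) \<bullet> w = 0" for a by (simp add: dot_cross_self)
    have T0: "a1 \<bullet> (a2 \<times> a3) = 0" using plane_zero[OF aw w] .
    have X1: "(w \<times> a1) \<bullet> (a2 \<times> a3) = 0" using plane_zero[OF wx aw(2) aw(3) w] .
    have X2: "a1 \<bullet> ((w \<times> a2) \<times> a3) = 0" using plane_zero[OF aw(1) wx aw(3) w] .
    have X3: "a1 \<bullet> (a2 \<times> (w \<times> a3)) = 0" using plane_zero[OF aw(1) aw(2) wx w] .
    have "b1 \<bullet> (a2 \<times> a3) + a1 \<bullet> (b2 \<times> a3) + a1 \<bullet> (a2 \<times> b3) =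
      ((p \<times> a1) \<bullet> (a2 \<times> a3) + a1 \<bullet> ((p \<times> a2) \<times> a3) + a1 \<bullet> (a2 \<times> (p \<times> a3)))
      + t1 * ((w \<times> a1) \<bullet> (a2 \<times> a3)) + t2 * (a1 \<bullet> ((w \<times> a2) \<times> a3)) + t3 * (a1 \<bullet> (a2 \<times> (w \<times> a3)))"
      unfolding b by (simp add: cross_add_left cross_add_right cross_mult_left cross_mult_right
          inner_add_left inner_add_right algebra_simps)
    also have "\<dots> = 0" using trace_id[of p a1 a2 a3] X1 X2 X3 by simp
    finally show ?thesis using T0 by simp
  qed
qed


context CO begin

lemma vpar_iff: "vparallel x y \<longleftrightarrow> (\<exists>r. re x = r *\<^sub>R re y)"
  by (simp add: vparallel_def pi_eq)

lemma line_iff: assumes OR: "orientation OR"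
  shows "(axis sp z \<inter> lineE sp OR (Pset dA) w \<noteq> {} \<and> dRe (sp (unitpart sp z) w) = 0) \<longleftrightarrow>
         onl dA (re w) (re (unitpart sp z)) (du (unitpart sp z))"
proof -
  let ?u = "unitpart sp z"
  have "axis sp z \<inter> lineE sp OR (Pset dA) w \<noteq> {} \<longleftrightarrow>
        (\<exists>B. B \<in> Eset sp \<and> ?u \<in> B \<and> (\<exists>t. diffE sp OR B (Pset dA) = pi (rsc t w)))"
    by (auto simp: axis_def lineE_def)
  also have "\<dots> \<longleftrightarrow> (\<exists>q. ?u \<in> Pset q \<and> (\<exists>t. q - dA = t *\<^sub>R re w))"
  proof
    assume "\<exists>B. B \<in> Eset sp \<and> ?u \<in> B \<and> (\<exists>t. diffE sp OR B (Pset dA) = pi (rsc t w))"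
    then obtain B where B: "B \<in> Eset sp" "?u \<in> B" "\<exists>t. diffE sp OR B (Pset dA) = pi (rsc t w)" by blast
    obtain q where q: "B = Pset q" using E_Pset[OF B(1)] by blast
    show "\<exists>q. ?u \<in> Pset q \<and> (\<exists>t. q - dA = t *\<^sub>R re w)"
      using B q diffE_char[OF OR, of q dA w] by blast
  next
    assume "\<exists>q. ?u \<in> Pset q \<and> (\<exists>t. q - dA = t *\<^sub>R re w)"
    then obtain q where q: "?u \<in> Pset q" "\<exists>t. q - dA = t *\<^sub>R re w" by blast
    then show "\<exists>B. B \<in> Eset sp \<and> ?u \<in> B \<and> (\<exists>t. diffE sp OR B (Pset dA) = pi (rsc t w))"
      using Pset_in_E[of q] diffE_char[OF OR, of q dA w] by blast
  qed
  finally show ?thesis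
    unfolding onl_def mem_Pset sp_re by (auto simp del: re_comp du_comp)
qed

end

theorem proposition14:
  fixes sp :: "dmod \<Rightarrow> dmod \<Rightarrow> dual" and OR :: "(3 \<Rightarrow> dmod) set"
    and z1 z2 z3 :: dmod
  assumes "scalar_product sp" and "orientation OR"
    and "z1 \<notin> epsM" and "z2 \<notin> epsM" and "z3 \<notin> epsM"
  shows "sp (cross sp OR z1 z2) z3 = 0 \<longleftrightarrow>
     ((\<forall>z\<in>{z1, z2, z3}. \<forall>z'\<in>{z1, z2, z3}. vparallel (unitpart sp z) (unitpart sp z'))
      \<or> (\<exists>A w. A \<in> Eset sp \<and> w \<notin> epsM \<and>
           (\<forall>z\<in>{z1, z2, z3}. axis sp z \<inter> lineE sp OR A w \<noteq> {} \<and>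
                              dRe (sp (unitpart sp z) w) = 0)))"
proof -
  interpret SP sp using assms(1) by unfold_locales
  have OR: "orientation OR" by (rule assms(2))
  obtain e0 where e0: "orthonormal sp e0" "is_basis e0" using exists_orthonormal_basis by blast
  have "\<exists>m. pos_orthonormal sp OR m" using exists_pos_orth[OF OR e0(2) e0(1)] by blast
  define m0 where "m0 = (SOME m. pos_orthonormal sp OR m)"
  have pm0: "pos_orthonormal sp OR m0" unfolding m0_def using someI_ex[OF \<open>\<exists>m. pos_orthonormal sp OR m\<close>] .
  have m0b: "is_basis m0"
  proof -
    from OR obtain b0 where "OR = {b. is_basis b \<and> same_orient b0 b}" unfolding orientation_def by blast
    then show ?thesis using pm0 unfolding pos_orthonormal_def by blast
  qed
  have m0o: "orthonormal sp m0" using pm0 unfolding pos_orthonormal_def orthonormal_def by blast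
  interpret C: CO sp m0 by unfold_locales (rule m0b, rule m0o)
  have cr: "cross sp OR x y = C.crs x y" for x y
    unfolding cross_def Let_def m0_def[symmetric] C.crs_def ..
  let ?u1 = "unitpart sp z1" and ?u2 = "unitpart sp z2" and ?u3 = "unitpart sp z3"
  obtain a1 b1 where u1: "a1 > 0" "z1 = Dual a1 b1 *s ?u1" "sp ?u1 ?u1 = 1" using unitpart_prop[OF assms(3)] by blast
  obtain a2 b2 where u2: "a2 > 0" "z2 = Dual a2 b2 *s ?u2" "sp ?u2 ?u2 = 1" using unitpart_prop[OF assms(4)] by blast
  obtain a3 b3 where u3: "a3 > 0" "z3 = Dual a3 b3 *s ?u3" "sp ?u3 ?u3 = 1" using unitpart_prop[OF assms(5)] by blast
  define K where "K = Dual a1 b1 * Dual a2 b2 * Dual a3 b3"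
  have kx: "sp (cross sp OR z1 z2) z3 = K * sp (C.crs ?u1 ?u2) ?u3"
    unfolding cr K_def by (subst u1(2), subst u2(2), subst u3(2)) (rule C.trip_scale)
  have k0: "dRe K \<noteq> 0" using u1(1) u2(1) u3(1) by (simp add: K_def)
  have s1: "sp (cross sp OR z1 z2) z3 = 0 \<longleftrightarrow> sp (C.crs ?u1 ?u2) ?u3 = 0"
    unfolding kx using mult_cancel_dual[OF k0] by auto
  have nrm: "C.re u \<bullet> C.re u = 1" "C.re u \<bullet> C.du u = 0" if "sp u u = 1" for u
  proof -
    show "C.re u \<bullet> C.re u = 1" using C.sp_re[of u u] that by simp
    have "C.re u \<bullet> C.du u + C.du u \<bullet> C.re u = 0" using C.sp_du[of u u] that by simp
    then show "C.re u \<bullet> C.du u = 0" by (simp add: inner_commute)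
  qed
  have s2: "sp (C.crs ?u1 ?u2) ?u3 = 0 \<longleftrightarrow>
    (C.re ?u1 \<bullet> (C.re ?u2 \<times> C.re ?u3) = 0 \<and>
     C.du ?u1 \<bullet> (C.re ?u2 \<times> C.re ?u3) + C.re ?u1 \<bullet> (C.du ?u2 \<times> C.re ?u3) + C.re ?u1 \<bullet> (C.re ?u2 \<times> C.du ?u3) = 0)"
    using C.trip_re C.trip_du dual_eq_iff[of _ 0] by (simp del: C.re_comp C.du_comp)
  have s3: "\<dots> \<longleftrightarrow> ((\<forall>x\<in>{C.re ?u1, C.re ?u2, C.re ?u3}. \<forall>y\<in>{C.re ?u1, C.re ?u2, C.re ?u3}. \<exists>r. x = r *\<^sub>R y) \<or>
     (\<exists>p w. w \<noteq> 0 \<and> onl p w (C.re ?u1) (C.du ?u1) \<and> onl p w (C.re ?u2) (C.du ?u2) \<and> onl p w (C.re ?u3) (C.du ?u3)))"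
    by (rule core) (use nrm u1(3) u2(3) u3(3) in auto)
  have s4: "(\<forall>z\<in>{z1, z2, z3}. \<forall>z'\<in>{z1, z2, z3}. vparallel (unitpart sp z) (unitpart sp z')) \<longleftrightarrow>
     (\<forall>x\<in>{C.re ?u1, C.re ?u2, C.re ?u3}. \<forall>y\<in>{C.re ?u1, C.re ?u2, C.re ?u3}. \<exists>r. x = r *\<^sub>R y)"
    by (simp add: C.vpar_iff del: C.re_comp C.du_comp)
  have s5: "(\<exists>A w. A \<in> Eset sp \<and> w \<notin> epsM \<and>
           (\<forall>z\<in>{z1, z2, z3}. axis sp z \<inter> lineE sp OR A w \<noteq> {} \<and> dRe (sp (unitpart sp z) w) = 0)) \<longleftrightarrow>
     (\<exists>p w. w \<noteq> 0 \<and> onl p w (C.re ?u1) (C.du ?u1) \<and> onl p w (C.re ?u2) (C.du ?u2) \<and> onl p w (C.re ?u3) (C.du ?u3))"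
  proof
    assume "\<exists>A w. A \<in> Eset sp \<and> w \<notin> epsM \<and>
           (\<forall>z\<in>{z1, z2, z3}. axis sp z \<inter> lineE sp OR A w \<noteq> {} \<and> dRe (sp (unitpart sp z) w) = 0)"
    then obtain A w where A: "A \<in> Eset sp" "w \<notin> epsM"
      "\<forall>z\<in>{z1, z2, z3}. axis sp z \<inter> lineE sp OR A w \<noteq> {} \<and> dRe (sp (unitpart sp z) w) = 0" by blast
    obtain p where p: "A = C.Pset p" using C.E_Pset[OF A(1)] by blast
    have "C.re w \<noteq> 0" using A(2) C.epsM_re by blast
    moreover have "onl p (C.re w) (C.re (unitpart sp z)) (C.du (unitpart sp z))" if "z \<in> {z1, z2, z3}" for z
      using A(3) that C.line_iff[OF OR, of z p w] p by blast
    ultimately show "\<exists>p w. w \<noteq> 0 \<and> onl p w (C.re ?u1) (C.du ?u1) \<and> onl p w (C.re ?u2) (C.du ?u2) \<and> onl p w (C.re ?u3) (C.du ?u3)"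
      by blast
  next
    assume "\<exists>p w. w \<noteq> 0 \<and> onl p w (C.re ?u1) (C.du ?u1) \<and> onl p w (C.re ?u2) (C.du ?u2) \<and> onl p w (C.re ?u3) (C.du ?u3)"
    then obtain p w where pw: "w \<noteq> 0" "onl p w (C.re ?u1) (C.du ?u1)" "onl p w (C.re ?u2) (C.du ?u2)"
      "onl p w (C.re ?u3) (C.du ?u3)" by blast
    define W where "W = C.mk w 0"
    have rW: "C.re W = w" by (simp add: W_def del: C.re_comp C.du_comp)
    have "W \<notin> epsM" using rW pw(1) C.epsM_re by simp
    moreover have "C.Pset p \<in> Eset sp" by (rule C.Pset_in_E)
    moreover have "\<forall>z\<in>{z1, z2, z3}. axis sp z \<inter> lineE sp OR (C.Pset p) W \<noteq> {} \<and> dRe (sp (unitpart sp z) W) = 0"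
      using C.line_iff[OF OR, of _ p W] pw rW by auto
    ultimately show "\<exists>A w. A \<in> Eset sp \<and> w \<notin> epsM \<and>
           (\<forall>z\<in>{z1, z2, z3}. axis sp z \<inter> lineE sp OR A w \<noteq> {} \<and> dRe (sp (unitpart sp z) w) = 0)"
      by blast
  qed
  show ?thesis using s1 s2 s3 s4 s5 by simp
qed


end
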